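(* A non-empty graph $T$ is a $\mathsf{TJ}_n$-graph for infinitely many integers $n$ if and only if there exists an integer $k$ such that $T$ is a maximum $\mathsf{TJ}_k$-graph.
   Context: Graphs are finite, simple, undirected; non-empty means having at least one vertex. $\mathsf{TJ}_k(G)$ is the graph on the cliques of $G$ of size $k$ where $C, C'$ are adjacent iff $|C \setminus C'| = |C' \setminus C| = 1$. $T$ is a $\mathsf{TJ}_k$-graph if $T \cong \mathsf{TJ}_k(G)$ for some graph $G$, and a maximum $\mathsf{TJ}_k$-graph if $T \cong \mathsf{TJ}_k(G)$ for some $G$ with $\omega(G) = k$ ($\omega$ = maximum clique size). *)

theory Defs
  imports Main
begin

type_synonym 'a graph = "'a set \<times> 'a set set"

definition is_graph :: "'a graph \<Rightarrow> bool" where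
  "is_graph G \<longleftrightarrow> finite (fst G) \<and>
     (\<forall>e \<in> snd G. e \<subseteq> fst G \<and> card e = 2)"

definition is_clique :: "'a graph \<Rightarrow> 'a set \<Rightarrow> bool" where
  "is_clique G C \<longleftrightarrow> C \<subseteq> fst G \<and>
     (\<forall>x \<in> C. \<forall>y \<in> C. x \<noteq> y \<longrightarrow> {x, y} \<in> snd G)"

definition cliques_of_size :: "nat \<Rightarrow> 'a graph \<Rightarrow> 'a set set" where
  "cliques_of_size k G = {C. is_clique G C \<and> card C = k}"

definition clique_number :: "'a graph \<Rightarrow> nat" where
  "clique_number G = Max {card C | C. is_clique G C}"

definition TJ :: "nat \<Rightarrow> 'a graph \<Rightarrow> 'a set graph" where
  "TJ k G = (cliques_of_size k G,
     {{C, C'} | C C'. C \<in> cliques_of_size k G \<and> C' \<in> cliques_of_size k G \<and>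
        card (C - C') = 1 \<and> card (C' - C) = 1})"

definition graph_iso :: "'a graph \<Rightarrow> 'b graph \<Rightarrow> bool" where
  "graph_iso G H \<longleftrightarrow> (\<exists>f. bij_betw f (fst G) (fst H) \<and>
     (\<forall>x \<in> fst G. \<forall>y \<in> fst G. {x, y} \<in> snd G \<longleftrightarrow> {f x, f y} \<in> snd H))"

text \<open>Source graphs G are taken on vertex type nat; every finite graph is
  isomorphic to one of these.\<close>
definition TJ_graph :: "nat \<Rightarrow> 'a graph \<Rightarrow> bool" where
  "TJ_graph k T \<longleftrightarrow> (\<exists>G :: nat graph. is_graph G \<and> graph_iso T (TJ k G))"

definition max_TJ_graph :: "nat \<Rightarrow> 'a graph \<Rightarrow> bool" where
  "max_TJ_graph k T \<longleftrightarrow>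
     (\<exists>G :: nat graph. is_graph G \<and> clique_number G = k \<and> graph_iso T (TJ k G))"

end

theory Submission
  imports Defs "HOL-Library.Infinite_Set"
begin

lemma clique_subset: "is_clique G C \<Longrightarrow> B \<subseteq> C \<Longrightarrow> is_clique G B"
  unfolding is_clique_def by blast

lemma TJ_edge:
  assumes "x \<in> cliques_of_size k G" "y \<in> cliques_of_size k G"
  shows "({x,y} \<in> snd (TJ k G)) = (card (x-y) = 1 \<and> card (y-x) = 1)"
proof
  assume "{x,y} \<in> snd (TJ k G)"
  then obtain C C' where "{x,y} = {C,C'}" "card (C - C') = 1" "card (C' - C) = 1"
    unfolding TJ_def by auto
  then show "card (x-y) = 1 \<and> card (y-x) = 1" by (auto simp: doubleton_eq_iff)
next
  assume "card (x-y) = 1 \<and> card (y-x) = 1"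
  then show "{x,y} \<in> snd (TJ k G)" using assms unfolding TJ_def by auto
qed

lemma iso_trans:
  assumes "graph_iso A B" "graph_iso B C"
  shows "graph_iso A C"
proof -
  obtain f where f: "bij_betw f (fst A) (fst B)"
    "\<forall>x \<in> fst A. \<forall>y \<in> fst A. {x, y} \<in> snd A \<longleftrightarrow> {f x, f y} \<in> snd B"
    using assms(1) unfolding graph_iso_def by blast
  obtain g where g: "bij_betw g (fst B) (fst C)"
    "\<forall>x \<in> fst B. \<forall>y \<in> fst B. {x, y} \<in> snd B \<longleftrightarrow> {g x, g y} \<in> snd C"
    using assms(2) unfolding graph_iso_def by blast
  have "bij_betw (g \<circ> f) (fst A) (fst C)" using f(1) g(1) bij_betw_trans by blast
  moreover have "\<forall>x \<in> fst A. \<forall>y \<in> fst A. {x, y} \<in> snd A \<longleftrightarrow> {(g \<circ> f) x, (g \<circ> f) y} \<in> snd C"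
    using f g bij_betwE[OF f(1)] by auto
  ultimately show ?thesis unfolding graph_iso_def by blast
qed

lemma clique_card_le: "is_graph G \<Longrightarrow> is_clique G C \<Longrightarrow> card C \<le> card (fst G)"
  unfolding is_graph_def is_clique_def by (simp add: card_mono)

lemma clique_finite: "is_graph G \<Longrightarrow> is_clique G C \<Longrightarrow> finite C"
  unfolding is_graph_def is_clique_def using finite_subset by blast

lemma cn_finite: "is_graph G \<Longrightarrow> finite {card C | C. is_clique G C}"
  by (rule finite_subset[of _ "{..card (fst G)}"]) (auto dest: clique_card_le)

lemma cn_ge: "is_graph G \<Longrightarrow> is_clique G C \<Longrightarrow> card C \<le> clique_number G"
  unfolding clique_number_def by (rule Max_ge[OF cn_finite]) auto

lemma construct:
  assumes G: "is_graph (G :: nat graph)" and om: "\<And>A. is_clique G A \<Longrightarrow> card A \<le> k"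
    and kn: "k \<le> n"
  shows "\<exists>G' :: nat graph. is_graph G' \<and> graph_iso (TJ k G) (TJ n G')"
proof -
  have "finite (fst G)" using G unfolding is_graph_def by blast
  then obtain M where M: "\<forall>v\<in>fst G. v < M" using finite_nat_set_iff_bounded by blast
  define U where "U = {M..<M+(n-k)}"
  define V' where "V' = fst G \<union> U"
  define E' where "E' = snd G \<union> {{u,v}| u v. u\<in>U \<and> v \<in> V' \<and> u \<noteq> v}"
  define G' where "G' = (V', E')"
  have disj: "fst G \<inter> U = {}" using M unfolding U_def by force
  have cU: "card U = n - k" "finite U" unfolding U_def by auto
  have gG': "is_graph G'"
    using G cU unfolding is_graph_def G'_def V'_def E'_def by auto
  have a: "is_clique G' (A \<union> U)" if A: "is_clique G A" for A
  proof -
    have AG: "A \<subseteq> fst G" using A unfolding is_clique_def by blast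
    { fix x y assume xy: "x \<in> A \<union> U" "y \<in> A \<union> U" "x \<noteq> y"
      have "{x,y} \<in> E'"
      proof (cases "x \<in> U")
        case True then show ?thesis using xy AG unfolding E'_def V'_def by blast
      next
        case False
        show ?thesis
        proof (cases "y \<in> U")
          case True
          then have "{y,x} \<in> E'" using xy AG unfolding E'_def V'_def by blast
          then show ?thesis by (simp add: insert_commute)
        next
          case False
          then show ?thesis using \<open>x \<notin> U\<close> xy A unfolding E'_def is_clique_def by blast
        qed
      qed }
    then show ?thesis using AG unfolding is_clique_def G'_def V'_def by auto
  qed
  have b: "is_clique G (C \<inter> fst G)" if "is_clique G' C" for C
  proof -
    { fix x y assume xy: "x \<in> C \<inter> fst G" "y \<in> C \<inter> fst G" "x \<noteq> y"
      then have "{x,y} \<in> E'" using that unfolding is_clique_def G'_def by auto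
      moreover have "{x,y} \<notin> {{u,v}| u v. u\<in>U \<and> v \<in> V' \<and> u \<noteq> v}"
      proof
        assume "{x,y} \<in> {{u,v}| u v. u\<in>U \<and> v \<in> V' \<and> u \<noteq> v}"
        then obtain u v where "{x,y} = {u,v}" "u \<in> U" by blast
        then have "u \<in> fst G \<inter> U" using xy by (auto simp: doubleton_eq_iff)
        then show False using disj by blast
      qed
      ultimately have "{x,y} \<in> snd G" unfolding E'_def by blast }
    then show ?thesis unfolding is_clique_def by blast
  qed
  define g where "g = (\<lambda>A. A \<union> U)"
  have cl: "cliques_of_size n G' = g ` cliques_of_size k G"
  proof
    show "g ` cliques_of_size k G \<subseteq> cliques_of_size n G'"
    proof
      fix X assume "X \<in> g ` cliques_of_size k G"
      then obtain A where A: "is_clique G A" "card A = k" "X = A \<union> U"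
        unfolding g_def cliques_of_size_def by auto
      have "A \<subseteq> fst G" using A unfolding is_clique_def by blast
      then have "card (A \<union> U) = k + (n - k)"
        using A cU disj clique_finite[OF G A(1)] by (subst card_Un_disjoint) auto
      then show "X \<in> cliques_of_size n G'" using A a kn unfolding cliques_of_size_def by auto
    qed
  next
    show "cliques_of_size n G' \<subseteq> g ` cliques_of_size k G"
    proof
      fix C assume "C \<in> cliques_of_size n G'"
      then have C: "is_clique G' C" "card C = n" unfolding cliques_of_size_def by auto
      have CV: "C \<subseteq> fst G \<union> U" using C unfolding is_clique_def G'_def V'_def by auto
      define A where "A = C \<inter> fst G"
      define B where "B = C \<inter> U"
      have fC: "finite C" using clique_finite[OF gG' C(1)] .
      have AB: "C = A \<union> B" "A \<inter> B = {}" using CV disj unfolding A_def B_def by auto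
      have cA: "card A \<le> k" using om b C(1) unfolding A_def by blast
      have cB: "card B \<le> n - k" using cU unfolding B_def by (metis card_mono inf_le2)
      have "card A + card B = n" using AB fC C(2)
        by (metis card_Un_disjoint finite_Un)
      then have "card A = k" "card B = card U" using cA cB cU kn by auto
      then have "B = U" using cU unfolding B_def by (metis card_subset_eq inf_le2)
      then have "C = g A" using AB unfolding g_def by simp
      moreover have "A \<in> cliques_of_size k G"
        using b C(1) \<open>card A = k\<close> unfolding A_def cliques_of_size_def by auto
      ultimately show "C \<in> g ` cliques_of_size k G" by blast
    qed
  qed
  have sub: "A \<subseteq> fst G" if "A \<in> cliques_of_size k G" for A
    using that unfolding cliques_of_size_def is_clique_def by auto
  have inj: "inj_on g (cliques_of_size k G)"
  proof
    fix A A' assume "A \<in> cliques_of_size k G" "A' \<in> cliques_of_size k G" "g A = g A'"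
    then have "A = g A - U" "A' = g A' - U" using sub disj unfolding g_def by auto
    then show "A = A'" using \<open>g A = g A'\<close> by simp
  qed
  have diff: "g A - g A' = A - A'" if "A \<in> cliques_of_size k G" for A A'
    using sub[OF that] disj unfolding g_def by auto
  have "graph_iso (TJ k G) (TJ n G')"
    unfolding graph_iso_def
  proof (intro exI[of _ g] conjI ballI)
    show "bij_betw g (fst (TJ k G)) (fst (TJ n G'))"
      using inj cl unfolding bij_betw_def TJ_def by simp
  next
    fix x y assume "x \<in> fst (TJ k G)" "y \<in> fst (TJ k G)"
    then have xy: "x \<in> cliques_of_size k G" "y \<in> cliques_of_size k G" unfolding TJ_def by auto
    then have "g x \<in> cliques_of_size n G'" "g y \<in> cliques_of_size n G'" using cl by auto
    then show "({x, y} \<in> snd (TJ k G)) = ({g x, g y} \<in> snd (TJ n G'))"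
      using TJ_edge[OF xy] TJ_edge[of "g x" n G' "g y"] diff[OF xy(1), of y] diff[OF xy(2), of x] by simp
  qed
  then show ?thesis using gG' by blast
qed

theorem corollary4p14:
  fixes T :: "'a graph"
  assumes "is_graph T" and "fst T \<noteq> {}"
  shows "infinite {n :: nat. TJ_graph n T} \<longleftrightarrow> (\<exists>k :: nat. max_TJ_graph k T)"
proof
  assume "infinite {n :: nat. TJ_graph n T}"
  then obtain n where n: "n \<ge> card (fst T)" "TJ_graph n T"
    unfolding infinite_nat_iff_unbounded_le by blast
  then obtain G :: "nat graph" where G: "is_graph G" "graph_iso T (TJ n G)"
    unfolding TJ_graph_def by blast
  then obtain f where f: "bij_betw f (fst T) (cliques_of_size n G)"
    unfolding graph_iso_def TJ_def by auto
  have fT: "finite (fst T)" using assms(1) unfolding is_graph_def by blast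
  have cCs: "card (cliques_of_size n G) = card (fst T)" using f bij_betw_same_card by metis
  have fCs: "finite (cliques_of_size n G)" using cCs fT assms(2) card_eq_0_iff by fastforce
  have neC: "cliques_of_size n G \<noteq> {}" using f assms(2) by (metis bij_betw_empty2)
  then obtain C0 where C0: "is_clique G C0" "card C0 = n" unfolding cliques_of_size_def by auto
  have le: "card C \<le> n" if C: "is_clique G C" for C
  proof (rule ccontr)
    assume "\<not> card C \<le> n"
    then obtain S where S: "S \<subseteq> C" "card S = Suc n"
      by (meson not_less_eq_eq obtain_subset_with_card_n)
    have fS: "finite S" using S by (metis card.infinite nat.distinct(1))
    have "(\<lambda>x. S - {x}) ` S \<subseteq> cliques_of_size n G"
    proof
      fix X assume "X \<in> (\<lambda>x. S - {x}) ` S"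
      then obtain x where x: "x \<in> S" "X = S - {x}" by blast
      have "is_clique G X" using clique_subset[OF C] S x by blast
      moreover have "card X = n" using x S fS by simp
      ultimately show "X \<in> cliques_of_size n G" unfolding cliques_of_size_def by simp
    qed
    moreover have "inj_on (\<lambda>x. S - {x}) S" by (rule inj_onI) blast
    ultimately have "card S \<le> card (cliques_of_size n G)"
      using fCs by (metis card_image card_mono)
    then show False using S cCs n(1) by simp
  qed
  have "clique_number G = n"
    unfolding clique_number_def
    using C0 le cn_finite[OF G(1)] by (intro Max_eqI) auto
  then show "\<exists>k. max_TJ_graph k T" using G unfolding max_TJ_graph_def by blast
next
  assume "\<exists>k. max_TJ_graph k T"
  then obtain k and G :: "nat graph" where G: "is_graph G" "clique_number G = k" "graph_iso T (TJ k G)"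
    unfolding max_TJ_graph_def by blast
  have om: "card A \<le> k" if "is_clique G A" for A using cn_ge[OF G(1) that] G(2) by simp
  have "TJ_graph n T" if kn: "k \<le> n" for n
  proof -
    obtain G' :: "nat graph" where "is_graph G'" "graph_iso (TJ k G) (TJ n G')"
      using construct[OF G(1) om kn] by blast
    then show ?thesis unfolding TJ_graph_def using iso_trans G(3) by blast
  qed
  then show "infinite {n :: nat. TJ_graph n T}"
    unfolding infinite_nat_iff_unbounded_le
  proof (intro allI)
    fix m show "\<exists>n\<ge>m. n \<in> {n. TJ_graph n T}"
      using \<open>\<And>n. k \<le> n \<Longrightarrow> TJ_graph n T\<close>[of "max m k"] by (intro exI[of _ "max m k"]) simp
  qed
qed

end
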